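(* Let $R$ be a function from a recursive subset of $\mathbb{N}^2$ to $\mathbb{N}$ such that $R(n,w)\in B^n$ whenever $R(n,w)$ is defined. Then there exists a coloring function $c:\mathbb{N}\rightarrow\{0,1\}$, uniformly recursive in $R$, such that for every $w\in\mathbb{Z}^+$ and every $n<\lambda(w)$, if $R(n,w)$ is defined then $c(w)\neq c(R(n,w)+w)$.
   Context: For $x=\sum_{i=0}^{k}2^{n_i}\in\mathbb{Z}^+$ with $n_0<\cdots<n_k$, set $\mu(x)=n_k$ and $\lambda(x)=n_0$. For each $n$, $B^n=\{x\in\mathbb{Z}^+:\mu(x)=n\}$. *)

theory Defs
  imports Main "HOL-Library.Nat_Bijection"
begin

definition mu :: "nat \<Rightarrow> nat" where
  "mu x = Max {i. bit x i}"

definition lam :: "nat \<Rightarrow> nat" where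
  "lam x = Min {i. bit x i}"

definition B :: "nat \<Rightarrow> nat set" where
  "B n = {x. 0 < x \<and> mu x = n}"

datatype recf = Zero | Succ | Proj nat | Comp recf "recf list" | Prim recf recf | Mn recf | Orc

inductive eval :: "(nat \<Rightarrow> nat) \<Rightarrow> recf \<Rightarrow> nat list \<Rightarrow> nat \<Rightarrow> bool" for Q where
  eval_Zero: "eval Q Zero xs 0"
| eval_Succ: "eval Q Succ (x # xs) (Suc x)"
| eval_Proj: "i < length xs \<Longrightarrow> eval Q (Proj i) xs (xs ! i)"
| eval_Comp: "length ys = length gs \<Longrightarrow> (\<forall>i<length gs. eval Q (gs ! i) xs (ys ! i))
     \<Longrightarrow> eval Q f ys z \<Longrightarrow> eval Q (Comp f gs) xs z"
| eval_Prim0: "eval Q f xs z \<Longrightarrow> eval Q (Prim f g) (0 # xs) z"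
| eval_PrimS: "eval Q (Prim f g) (n # xs) y \<Longrightarrow> eval Q g (n # y # xs) z
     \<Longrightarrow> eval Q (Prim f g) (Suc n # xs) z"
| eval_Mn: "eval Q f (n # xs) 0 \<Longrightarrow> (\<forall>m<n. \<exists>y. eval Q f (m # xs) (Suc y))
     \<Longrightarrow> eval Q (Mn f) xs n"
| eval_Orc: "eval Q Orc (x # xs) (Q x)"

text \<open>A subset of N^2 is recursive: its characteristic function is computed by
  a term relative to the constant-zero orc_of (which is itself computable).\<close>

definition recursive_set2 :: "(nat \<times> nat) set \<Rightarrow> bool" where
  "recursive_set2 S \<longleftrightarrow> (\<exists>e. \<forall>n w. eval (\<lambda>_. 0) e [n, w] (if (n, w) \<in> S then 1 else 0))"

definition orc_of :: "(nat \<Rightarrow> nat \<Rightarrow> nat option) \<Rightarrow> nat \<Rightarrow> nat" where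
  "orc_of R x = (case prod_decode x of (n, w) \<Rightarrow>
      (case R n w of None \<Rightarrow> 0 | Some v \<Rightarrow> Suc v))"

end

theory Submission
  imports Defs
begin


lemma bit_le: "bit (v::nat) i \<Longrightarrow> 2^i \<le> v"
proof -
  assume "bit v i"
  then have "odd (v div 2^i)" by (simp add: bit_iff_odd)
  then have "v div 2^i \<ge> 1" by (cases "v div 2^i") auto
  then show ?thesis
    using div_less[of v "2^i"] by (cases "v < 2^i") auto
qed

lemma bitset_finite: "finite {i. bit (v::nat) i}"
proof -
  have "{i. bit v i} \<subseteq> {..<v}"
  proof
    fix i assume "i \<in> {i. bit v i}"
    then have "2^i \<le> v" using bit_le by auto
    moreover have "i < 2^i" by (rule less_exp)
    ultimately show "i \<in> {..<v}" by (simp del: less_exp)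
  qed
  then show ?thesis using finite_subset by blast
qed

lemma bitset_ne: "0 < (v::nat) \<Longrightarrow> {i. bit v i} \<noteq> {}"
proof
  assume "0 < v" "{i. bit v i} = {}"
  then have "v = 0" by (intro bit_eqI) auto
  with \<open>0 < v\<close> show False by simp
qed

lemma mu_bounds: assumes "0 < (v::nat)" shows "2^(mu v) \<le> v" "v < 2^(Suc (mu v))"
proof -
  have "bit v (mu v)" unfolding mu_def using Max_in[OF bitset_finite bitset_ne[OF assms]] by simp
  then show "2^(mu v) \<le> v" by (rule bit_le)
  have "take_bit (Suc (mu v)) v = v"
  proof (rule bit_eqI)
    fix i show "bit (take_bit (Suc (mu v)) v) i = bit v i"
      using Max_ge[OF bitset_finite, of i v] unfolding mu_def by (auto simp: bit_take_bit_iff)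
  qed
  then show "v < 2^(Suc (mu v))" by (metis take_bit_nat_less_exp)
qed

lemma lam_dvd: assumes "0 < (w::nat)" "n < lam w" shows "2^(Suc n) dvd w"
proof -
  have "take_bit (Suc n) w = 0"
  proof (rule bit_eqI)
    fix i show "bit (take_bit (Suc n) w) i = bit (0::nat) i"
      using Min_le[OF bitset_finite, of i w] assms(2) unfolding lam_def by (auto simp: bit_take_bit_iff)
  qed
  then show ?thesis by (simp add: take_bit_eq_0_iff)
qed


definition tb :: "nat \<Rightarrow> nat" where "tb x = (LEAST i. x div 2^(Suc i) = 0)"

lemma tb_eq: assumes "2^i \<le> x" "x < 2^(Suc i)" shows "tb x = i"
  unfolding tb_def
proof (rule Least_equality)
  show "x div 2 ^ Suc i = 0" using assms(2) by simp
  fix j assume "x div 2 ^ Suc j = 0"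
  then have "x < 2^(Suc j)" by (simp add: div_eq_0_iff)
  with assms(1) have h: "2^i < (2::nat)^(Suc j)" by linarith
  have "i < Suc j" using power_less_imp_less_exp[of "2::nat" i "Suc j"] h by simp
  then show "i \<le> j" by simp
qed

lemma tb_mu: "0 < x \<Longrightarrow> tb x = mu x"
  using tb_eq mu_bounds by blast

lemma tb_bounds: "0 < x \<Longrightarrow> 2^(tb x) \<le> x \<and> x < 2^(Suc (tb x))"
  using tb_mu mu_bounds by simp

lemma tb_le: "x < 2^(Suc L) \<Longrightarrow> tb x \<le> L"
  unfolding tb_def by (rule Least_le) simp

lemma mult_step: "(m::nat) dvd a \<Longrightarrow> m dvd b \<Longrightarrow> a < b \<Longrightarrow> a + m \<le> b"
proof -
  assume "m dvd a" "m dvd b" "a < b"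
  then obtain i j where "a = m*i" "b = m*j" by (auto elim!: dvdE)
  have "i < j"
  proof (rule ccontr)
    assume "\<not> i < j"
    then have "m*j \<le> m*i" by simp
    then show False using \<open>a < b\<close> \<open>a = m*i\<close> \<open>b = m*j\<close> by simp
  qed
  then have "m * Suc i \<le> m*j" by (simp only: Suc_le_eq[symmetric] mult_le_mono2)
  then have "m*i + m \<le> m*j" by simp
  with \<open>a = m*i\<close> \<open>b = m*j\<close> show ?thesis by simp
qed

definition nb :: "(nat \<Rightarrow> nat) \<Rightarrow> nat \<Rightarrow> nat \<Rightarrow> (nat \<Rightarrow> nat) \<Rightarrow> nat" where
 "nb Q L y G = (if y div 2^(Suc L) mod 2 = 0 then G y
    else if y mod 2^(Suc L) = 0 then 0
    else if Q (prod_encode (tb (y mod 2^(Suc L)), y - y mod 2^(Suc L))) = 0 then G y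
    else if G y = G (y - y mod 2^(Suc L) + Q (prod_encode (tb (y mod 2^(Suc L)), y - y mod 2^(Suc L))) - 1) then 1 else 0)"

lemma nb_case1: "y div 2^(Suc L) mod 2 = 0 \<Longrightarrow> nb Q L y G = G y"
  unfolding nb_def by simp
lemma nb_case2: "y div 2^(Suc L) mod 2 = 1 \<Longrightarrow> y mod 2^(Suc L) = 0 \<Longrightarrow> nb Q L y G = 0"
  unfolding nb_def by simp
lemma nb_case3: "y div 2^(Suc L) mod 2 = 1 \<Longrightarrow> y mod 2^(Suc L) = x \<Longrightarrow> x \<noteq> 0 \<Longrightarrow>
   Q (prod_encode (tb x, y - x)) = 0 \<Longrightarrow> nb Q L y G = G y"
  unfolding nb_def by simp
lemma nb_case4: "y div 2^(Suc L) mod 2 = 1 \<Longrightarrow> y mod 2^(Suc L) = x \<Longrightarrow> x \<noteq> 0 \<Longrightarrow>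
   Q (prod_encode (tb x, y - x)) = Suc r \<Longrightarrow> nb Q L y G = (if G y = G (y - x + r) then 1 else 0)"
  unfolding nb_def by simp

fun gc :: "(nat \<Rightarrow> nat) \<Rightarrow> nat \<Rightarrow> nat \<Rightarrow> nat" where
  "gc Q 0 y = 0"
| "gc Q (Suc L) y = nb Q L y (gc Q L)"

lemma g01: "gc Q L y \<le> 1"
  by (induction L arbitrary: y) (auto simp: nb_def)

lemma key:
  assumes v1: "2^n \<le> v" and v2: "v < 2^(Suc n)" and dy: "2^(Suc n) dvd y"
    and Qy: "Q (prod_encode (n, y)) = Suc v"
  shows "y mod 2^(Suc L) \<noteq> 0 \<Longrightarrow> gc Q L y \<noteq> gc Q L (y + v)"
proof (induction L)
  case 0
  then have "odd y" by (simp add: odd_iff_mod_2_eq_one)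
  moreover have "2 dvd y" using dy by (metis dvd_trans dvd_triv_left power_Suc)
  ultimately show ?case by simp
next
  case (Suc L)
  define d where "d = (2::nat)^(Suc L)"
  define m where "m = (2::nat)^(Suc n)"
  define q where "q = y div d"
  define x where "x = y mod d"
  have dpos: "0 < d" unfolding d_def by simp
  have yq: "y = q*d + x" unfolding q_def x_def by simp
  have xd: "x < d" unfolding x_def using dpos by simp
  have D2: "(2::nat)^(Suc (Suc L)) = d * 2" unfolding d_def by simp
  have D: "y mod 2^(Suc (Suc L)) = (q mod 2) * d + x"
    unfolding D2 q_def x_def by (simp add: mod_mult2_eq)
  have hyp: "y mod 2^(Suc (Suc L)) \<noteq> 0" by fact
  have mdy: "m dvd y" using dy m_def by simp
  have mdx: "m dvd x" if "n \<le> L"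
  proof -
    have "m dvd d" unfolding m_def d_def using that by (simp add: le_imp_power_dvd)
    then show ?thesis unfolding x_def using mdy by (simp add: dvd_mod)
  qed
  have vm: "v < m" using v2 m_def by simp
  have gb: "\<And>z. gc Q L z \<le> 1" by (rule g01)
  consider (ev) "q mod 2 = 0" | (od) "q mod 2 = 1" by arith
  then show ?case
  proof cases
    case ev
    then have x0: "x \<noteq> 0" using D hyp by simp
    have nL: "n \<le> L"
    proof (rule ccontr)
      assume "\<not> n \<le> L"
      then have "d dvd m" unfolding m_def d_def by (simp add: le_imp_power_dvd)
      then have "d dvd y" using mdy by (rule dvd_trans)
      then show False using x0 unfolding x_def by simp
    qed
    have "x + m \<le> d" using mult_step[OF mdx[OF nL], of d] xd nL unfolding m_def d_def
      by (simp add: le_imp_power_dvd)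
    then have xvd: "x + v < d" using vm by simp
    have yv: "y + v = q*d + (x + v)" using yq by simp
    have "(y + v) div d = q" unfolding yv using xvd by simp
    then have e2: "(y+v) div 2^(Suc L) mod 2 = 0" using ev d_def by simp
    have e1: "y div 2^(Suc L) mod 2 = 0" using ev d_def q_def by simp
    have "y mod 2^(Suc L) \<noteq> 0" using x0 x_def d_def by simp
    then have "gc Q L y \<noteq> gc Q L (y+v)" by (rule Suc.IH)
    then show ?thesis by (simp add: nb_case1[OF e1] nb_case1[OF e2])
  next
    case od
    have nL: "n \<le> L"
    proof (rule ccontr)
      assume "\<not> n \<le> L"
      then have "2^(Suc (Suc L)) dvd m" unfolding m_def by (intro le_imp_power_dvd) simp
      then have "2^(Suc (Suc L)) dvd y" using mdy by (rule dvd_trans)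
      then show False using hyp by simp
    qed
    have md: "m dvd d" unfolding m_def d_def using nL by (simp add: le_imp_power_dvd)
    have "m \<le> d" using md dpos by (simp add: dvd_imp_le)
    then have vd: "v < d" using vm by simp
    have o1: "y div 2^(Suc L) mod 2 = 1" using od d_def q_def by simp
    show ?thesis
    proof (cases "x = 0")
      case True
      have yv: "y + v = q*d + v" using yq True by simp
      have "(y + v) div d = q" unfolding yv using vd by simp
      then have o2: "(y+v) div 2^(Suc L) mod 2 = 1" using od d_def by simp
      have "(y + v) mod d = v" unfolding yv using vd by simp
      then have m2: "(y + v) mod 2^(Suc L) = v" using d_def by simp
      have v0: "v \<noteq> 0" using v1 by (metis not_less0 le_zero_eq power_eq_0_iff zero_neq_numeral neq0_conv)
      have tv: "tb v = n" using tb_eq[OF v1 v2] .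
      have Q2: "Q (prod_encode (tb v, y + v - v)) = Suc v" using Qy tv by simp
      have x0': "y mod 2^(Suc L) = 0" using True x_def d_def by simp
      show ?thesis
        by (simp add: nb_case2[OF o1 x0'] nb_case4[where Q=Q and L=L and y="y+v" and x=v and r=v, OF o2 m2 v0 Q2])
    next
      case False
      have "x + m \<le> d" using mult_step[OF mdx[OF nL] md] xd by simp
      then have xvd: "x + v < d" using vm by simp
      have yv: "y + v = q*d + (x + v)" using yq by simp
      have "(y + v) div d = q" unfolding yv using xvd by simp
      then have o2: "(y+v) div 2^(Suc L) mod 2 = 1" using od d_def by simp
      have "(y + v) mod d = x + v" unfolding yv using xvd by simp
      then have m2: "(y + v) mod 2^(Suc L) = x + v" using d_def by simp
      have m1: "y mod 2^(Suc L) = x" using x_def d_def by simp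
      have xp: "0 < x" using False by simp
      define t where "t = tb x"
      have t1: "2^t \<le> x" and t2: "x < 2^(Suc t)" using tb_bounds[OF xp] t_def by auto
      have "m \<le> x" using mdx[OF nL] xp by (simp add: dvd_imp_le)
      then have "m < 2^(Suc t)" using t2 by simp
      then have "Suc n < Suc t" unfolding m_def using power_less_imp_less_exp[of "2::nat" "Suc n" "Suc t"] by simp
      then have "m dvd 2^(Suc t)" unfolding m_def by (simp add: le_imp_power_dvd)
      then have "x + m \<le> 2^(Suc t)" using mult_step[OF mdx[OF nL]] t2 by simp
      then have "x + v < 2^(Suc t)" using vm by simp
      then have txv: "tb (x + v) = tb x" using tb_eq[of t "x+v"] t1 t_def by simp
      have yy: "y + v - (x + v) = y - x" by simp
      have xv0: "x + v \<noteq> 0" using False by simp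
      have IH: "gc Q L y \<noteq> gc Q L (y+v)" using Suc.IH m1 False by simp
      show ?thesis
      proof (cases "Q (prod_encode (tb x, y - x))")
        case 0
        then have Q2: "Q (prod_encode (tb (x+v), y + v - (x+v))) = 0" using txv yy by simp
        show ?thesis using IH by (simp add: nb_case3[where Q=Q and L=L and y=y and x=x, OF o1 m1 False 0] nb_case3[where Q=Q and L=L and y="y+v" and x="x+v", OF o2 m2 xv0 Q2])
      next
        case (Suc r)
        then have Q2: "Q (prod_encode (tb (x+v), y + v - (x+v))) = Suc r" using txv yy by simp
        show ?thesis using IH gb[of y] gb[of "y+v"] gb[of "y - x + r"]
          by (simp add: nb_case4[where Q=Q and L=L and y=y and x=x and r=r, OF o1 m1 False Suc] nb_case4[where Q=Q and L=L and y="y+v" and x="x+v" and r=r, OF o2 m2 xv0 Q2] yy)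
      qed
    qed
  qed
qed

lemma g_stable: "gc Q (y + k) y = gc Q y y"
proof (induction k)
  case 0 then show ?case by simp
next
  case (Suc k)
  have "y < 2^y" by (rule less_exp)
  also have "(2::nat)^y \<le> 2^(Suc (y+k))" by (rule power_increasing) simp_all
  finally have "y < 2^(Suc (y+k))" .
  then have "y div 2^(Suc (y+k)) mod 2 = 0" by simp
  then have "gc Q (Suc (y + k)) y = gc Q (y+k) y" by (simp only: gc.simps nb_case1)
  then show ?case using Suc by simp
qed



definition cmp :: "(nat \<Rightarrow> nat) \<Rightarrow> nat \<Rightarrow> recf \<Rightarrow> (nat list \<Rightarrow> nat) \<Rightarrow> bool" where
  "cmp Q k t F \<longleftrightarrow> (\<forall>xs. k \<le> length xs \<longrightarrow> eval Q t xs (F xs))"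

fun prs :: "(nat list \<Rightarrow> nat) \<Rightarrow> (nat list \<Rightarrow> nat) \<Rightarrow> nat \<Rightarrow> nat list \<Rightarrow> nat" where
  "prs F G 0 ys = F ys"
| "prs F G (Suc n) ys = G (n # prs F G n ys # ys)"

lemma cmp_cong: "cmp Q k t F \<Longrightarrow> (\<forall>xs. k \<le> length xs \<longrightarrow> F xs = F' xs) \<Longrightarrow> cmp Q k t F'"
  unfolding cmp_def by auto

lemma cmp_Zero: "cmp Q k Zero (\<lambda>_. 0)"
  unfolding cmp_def by (auto intro: eval_Zero)

lemma cmp_Succ: "0 < k \<Longrightarrow> cmp Q k Succ (\<lambda>xs. Suc (xs!0))"
  unfolding cmp_def
proof (intro allI impI)
  fix xs :: "nat list" assume "0 < k" "k \<le> length xs"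
  then obtain x ys where "xs = x # ys" by (cases xs) auto
  then show "eval Q Succ xs (Suc (xs!0))" by (simp add: eval_Succ)
qed

lemma cmp_Orc: "0 < k \<Longrightarrow> cmp Q k Orc (\<lambda>xs. Q (xs!0))"
  unfolding cmp_def
proof (intro allI impI)
  fix xs :: "nat list" assume "0 < k" "k \<le> length xs"
  then obtain x ys where "xs = x # ys" by (cases xs) auto
  then show "eval Q Orc xs (Q (xs!0))" by (simp add: eval_Orc)
qed

lemma cmp_Proj: "i < k \<Longrightarrow> cmp Q k (Proj i) (\<lambda>xs. xs!i)"
  unfolding cmp_def by (auto intro: eval_Proj)

lemma cmp_Comp: "cmp Q (length gs) f F \<Longrightarrow> length Gs = length gs \<Longrightarrow>
   (\<forall>i<length gs. cmp Q k (gs!i) (Gs!i)) \<Longrightarrow> cmp Q k (Comp f gs) (\<lambda>xs. F (map (\<lambda>G. G xs) Gs))"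
  unfolding cmp_def
proof (intro allI impI)
  fix xs :: "nat list"
  assume f: "\<forall>xs. length gs \<le> length xs \<longrightarrow> eval Q f xs (F xs)" and l: "length Gs = length gs"
    and gs: "\<forall>i<length gs. \<forall>xs. k \<le> length xs \<longrightarrow> eval Q (gs ! i) xs ((Gs ! i) xs)"
    and k: "k \<le> length xs"
  show "eval Q (Comp f gs) xs (F (map (\<lambda>G. G xs) Gs))"
  proof (rule eval_Comp)
    show "length (map (\<lambda>G. G xs) Gs) = length gs" using l by simp
    show "\<forall>i<length gs. eval Q (gs ! i) xs (map (\<lambda>G. G xs) Gs ! i)" using gs k l by simp
    show "eval Q f (map (\<lambda>G. G xs) Gs) (F (map (\<lambda>G. G xs) Gs))" using f l by simp
  qed
qed

lemma cmp_Comp1: "cmp Q 1 f F \<Longrightarrow> cmp Q k a A \<Longrightarrow> cmp Q k (Comp f [a]) (\<lambda>xs. F [A xs])"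
  using cmp_Comp[of Q "[a]" f F "[A]" k] by simp

lemma cmp_Comp2: assumes "cmp Q 2 f F" "cmp Q k a A1" "cmp Q k b A2"
  shows "cmp Q k (Comp f [a, b]) (\<lambda>xs. F [A1 xs, A2 xs])"
proof -
  have l: "length [a, b] = 2" by simp
  have f: "cmp Q (length [a, b]) f F" unfolding l by fact
  have i: "\<forall>i<length [a, b]. cmp Q k ([a, b]!i) ([A1, A2]!i)"
  proof (intro allI impI)
    fix i assume "i < length [a, b]"
    then have "i = 0 \<or> i = 1" by auto
    then show "cmp Q k ([a, b]!i) ([A1, A2]!i)" using assms by auto
  qed
  show ?thesis using cmp_Comp[OF f _ i] by simp
qed

lemma cmp_Comp3: assumes "cmp Q 3 f F" "cmp Q k a A1" "cmp Q k b A2" "cmp Q k c A3"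
  shows "cmp Q k (Comp f [a, b, c]) (\<lambda>xs. F [A1 xs, A2 xs, A3 xs])"
proof -
  have l: "length [a, b, c] = 3" by simp
  have f: "cmp Q (length [a, b, c]) f F" unfolding l by fact
  have i: "\<forall>i<length [a, b, c]. cmp Q k ([a, b, c]!i) ([A1, A2, A3]!i)"
  proof (intro allI impI)
    fix i assume "i < length [a, b, c]"
    then have "i = 0 \<or> i = 1 \<or> i = 2" by auto
    then show "cmp Q k ([a, b, c]!i) ([A1, A2, A3]!i)" using assms by auto
  qed
  show ?thesis using cmp_Comp[OF f _ i] by simp
qed

lemma cmp_Prim: "cmp Q (k - 1) f F \<Longrightarrow> cmp Q (Suc k) g G \<Longrightarrow> 0 < k \<Longrightarrow>
   cmp Q k (Prim f g) (\<lambda>xs. prs F G (xs!0) (tl xs))"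
  unfolding cmp_def
proof (intro allI impI)
  fix xs :: "nat list"
  assume f: "\<forall>xs. k - 1 \<le> length xs \<longrightarrow> eval Q f xs (F xs)"
    and g: "\<forall>xs. Suc k \<le> length xs \<longrightarrow> eval Q g xs (G xs)" and k0: "0 < k" and k: "k \<le> length xs"
  then obtain n ys where xs: "xs = n # ys" by (cases xs) auto
  with k have ys: "k - 1 \<le> length ys" by simp
  have "eval Q (Prim f g) (n # ys) (prs F G n ys)"
  proof (induction n)
    case 0 then show ?case using f ys by (simp add: eval_Prim0)
  next
    case (Suc n)
    have "eval Q g (n # prs F G n ys # ys) (G (n # prs F G n ys # ys))" using g ys k0 by simp
    then show ?case using Suc by (simp add: eval_PrimS)
  qed
  then show "eval Q (Prim f g) xs (prs F G (xs ! 0) (tl xs))" using xs by simp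
qed

lemma cmp_Mn: "cmp Q (Suc k) f F \<Longrightarrow> (\<forall>xs. k \<le> length xs \<longrightarrow> (\<exists>n. F (n # xs) = 0)) \<Longrightarrow>
   cmp Q k (Mn f) (\<lambda>xs. LEAST n. F (n # xs) = 0)"
  unfolding cmp_def
proof (intro allI impI)
  fix xs :: "nat list"
  assume f: "\<forall>xs. Suc k \<le> length xs \<longrightarrow> eval Q f xs (F xs)"
    and ex: "\<forall>xs. k \<le> length xs \<longrightarrow> (\<exists>n. F (n # xs) = 0)" and k: "k \<le> length xs"
  define n where "n = (LEAST n. F (n # xs) = 0)"
  obtain n0 where "F (n0 # xs) = 0" using ex k by blast
  then have Fn: "F (n # xs) = 0" unfolding n_def by (rule LeastI)
  show "eval Q (Mn f) xs (LEAST n. F (n # xs) = 0)"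
    unfolding n_def[symmetric]
  proof (rule eval_Mn)
    have "eval Q f (n # xs) (F (n # xs))" using f k by simp
    then show "eval Q f (n # xs) 0" using Fn by simp
    show "\<forall>m<n. \<exists>y. eval Q f (m # xs) (Suc y)"
    proof (intro allI impI)
      fix m assume "m < n"
      then have "F (m # xs) \<noteq> 0" unfolding n_def by (rule not_less_Least)
      then have "F (m # xs) = Suc (F (m # xs) - 1)" by simp
      moreover have "eval Q f (m # xs) (F (m # xs))" using f k by simp
      ultimately show "\<exists>y. eval Q f (m # xs) (Suc y)" by (intro exI[of _ "F (m # xs) - 1"]) simp
    qed
  qed
qed

lemma prs_eqI: "(\<And>ys. F ys = H 0 ys) \<Longrightarrow> (\<And>n ys. G (n # H n ys # ys) = H (Suc n) ys) \<Longrightarrow> prs F G n ys = H n ys"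
  by (induction n) auto

lemma tl_nth: "Suc 0 \<le> length xs \<Longrightarrow> tl xs ! i = xs ! Suc i"
  by (cases xs) auto

fun cnst :: "nat \<Rightarrow> recf" where
  "cnst 0 = Zero"
| "cnst (Suc c) = Comp Succ [cnst c]"

lemma cmp_cnst: "cmp Q k (cnst c) (\<lambda>_. c)"
proof (induction c)
  case 0 then show ?case by (simp add: cmp_Zero)
next
  case (Suc c)
  have "cmp Q 1 Succ (\<lambda>xs. Suc (xs!0))" by (rule cmp_Succ) simp
  from cmp_Comp1[OF this Suc.IH] show ?case by simp
qed

lemmas cmp_base = cmp_Zero cmp_Succ cmp_Orc cmp_Proj cmp_Comp1 cmp_Comp2 cmp_Comp3 cmp_Prim cmp_Mn cmp_cnst

definition "ADD = Prim (Proj 0) (Comp Succ [Proj 1])"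
lemma cmp_ADD: "cmp Q 2 ADD (\<lambda>xs. xs!0 + xs!1)"
  unfolding ADD_def
  apply (rule cmp_cong)
   apply (rule cmp_base | simp)+
  apply (intro allI impI)
  apply (subst prs_eqI[where H="\<lambda>n ys. n + ys!0"])
    apply (simp_all add: tl_nth)
  done

definition "MUL = Prim Zero (Comp ADD [Proj 1, Proj 2])"
lemma cmp_MUL: "cmp Q 2 MUL (\<lambda>xs. xs!0 * xs!1)"
  unfolding MUL_def
  apply (rule cmp_cong)
   apply (rule cmp_ADD cmp_base | simp)+
  apply (intro allI impI)
  apply (subst prs_eqI[where H="\<lambda>n ys. n * ys!0"])
    apply (simp_all add: tl_nth)
  done

definition "PRED = Prim Zero (Proj 0)"
lemma cmp_PRED: "cmp Q 1 PRED (\<lambda>xs. xs!0 - 1)"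
  unfolding PRED_def
  apply (rule cmp_cong)
   apply (rule cmp_base | simp)+
  apply (intro allI impI)
  apply (subst prs_eqI[where H="\<lambda>n ys. n - 1"])
    apply (simp_all add: tl_nth)
  done

definition "SUBR = Prim (Proj 0) (Comp PRED [Proj 1])"
lemma cmp_SUBR: "cmp Q 2 SUBR (\<lambda>xs. xs!1 - xs!0)"
  unfolding SUBR_def
  apply (rule cmp_cong)
   apply (rule cmp_PRED cmp_base | simp)+
  apply (intro allI impI)
  apply (subst prs_eqI[where H="\<lambda>n ys. ys!0 - n"])
    apply (simp_all add: tl_nth)
  done

definition "SUB = Comp SUBR [Proj 1, Proj 0]"
lemma cmp_SUB: "cmp Q 2 SUB (\<lambda>xs. xs!0 - xs!1)"
  unfolding SUB_def
  apply (rule cmp_cong)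
   apply (rule cmp_SUBR cmp_base | simp)+
  done

definition "IFZ = Prim (Proj 0) (Proj 3)"
lemma cmp_IFZ: "cmp Q 3 IFZ (\<lambda>xs. if xs!0 = 0 then xs!1 else xs!2)"
  unfolding IFZ_def
  apply (rule cmp_cong)
   apply (rule cmp_base | simp)+
  apply (intro allI impI)
  apply (subst prs_eqI[where H="\<lambda>n ys. if n = 0 then ys!0 else ys!1"])
    apply (simp_all add: tl_nth numeral_2_eq_2)
  done

definition "POW2 = Prim (cnst 1) (Comp ADD [Proj 1, Proj 1])"
lemma cmp_POW2: "cmp Q 1 POW2 (\<lambda>xs. 2 ^ (xs!0))"
  unfolding POW2_def
  apply (rule cmp_cong)
   apply (rule cmp_ADD cmp_base | simp)+
  apply (intro allI impI)
  apply (subst prs_eqI[where H="\<lambda>n ys. 2 ^ n"])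
    apply (simp_all add: tl_nth)
  done

lemma least_div: assumes "0 < (d::nat)" shows "(LEAST q. Suc x - Suc q * d = 0) = x div d"
proof (rule Least_equality)
  have "x < Suc (x div d) * d" using assms
    by (metis dividend_less_div_times mult.commute mult_Suc_right add.commute)
  then show "Suc x - Suc (x div d) * d = 0" by simp
  fix q assume "Suc x - Suc q * d = 0"
  then have "x < Suc q * d" by simp
  then have "x div d < Suc q" using assms by (metis less_mult_imp_div_less)
  then show "x div d \<le> q" by simp
qed

definition "DIVP = Mn (Comp SUB [Comp Succ [Proj 1], Comp MUL [Comp Succ [Proj 0], Comp POW2 [Proj 2]]])"
lemma cmp_DIVP: "cmp Q 2 DIVP (\<lambda>xs. xs!0 div 2 ^ (xs!1))"
  unfolding DIVP_def
  apply (rule cmp_cong)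
   apply (rule cmp_SUB cmp_MUL cmp_POW2 cmp_base | simp)+
   apply (intro allI impI)
  subgoal for xs
    apply (rule exI[of _ "xs!0"])
    using mult_le_mono2[of 1 "2^(xs!(Suc 0))" "Suc (xs!0)"] by simp
  apply (intro allI impI)
  subgoal for xs
    apply (subst least_div[symmetric, of "2^(xs!1)" "xs!0"])
     apply simp
    apply (rule arg_cong[where f=Least])
    apply (rule ext)
    apply (simp add: numeral_2_eq_2)
    done
  done

lemma bt_eq: "(T::nat) div 2^z - (T div (2 * 2^z) + T div (2 * 2^z)) = T div 2^z mod 2"
proof -
  have "T div (2 * 2^z) = T div 2^z div 2" by (metis div_mult2_eq mult.commute)
  then show ?thesis by (simp add: minus_mult_div_eq_mod[symmetric])
qed

definition "BT = Comp SUB [Comp DIVP [Proj 0, Proj 1],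
   Comp ADD [Comp DIVP [Proj 0, Comp Succ [Proj 1]], Comp DIVP [Proj 0, Comp Succ [Proj 1]]]]"
lemma cmp_BT: "cmp Q 2 BT (\<lambda>xs. xs!0 div 2 ^ (xs!1) mod 2)"
  unfolding BT_def
  apply (rule cmp_cong)
   apply (rule cmp_SUB cmp_ADD cmp_DIVP cmp_base | simp)+
  apply (simp add: bt_eq)
  done

definition "MODP = Comp SUB [Proj 0, Comp MUL [Comp POW2 [Proj 1], Comp DIVP [Proj 0, Proj 1]]]"
lemma cmp_MODP: "cmp Q 2 MODP (\<lambda>xs. xs!0 mod 2 ^ (xs!1))"
  unfolding MODP_def
  apply (rule cmp_cong)
   apply (rule cmp_SUB cmp_MUL cmp_POW2 cmp_DIVP cmp_base | simp)+
  apply (simp add: minus_mult_div_eq_mod)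
  done

definition "TB = Mn (Comp DIVP [Proj 1, Comp Succ [Proj 0]])"
lemma cmp_TB: "cmp Q 1 TB (\<lambda>xs. tb (xs!0))"
  unfolding TB_def
  apply (rule cmp_cong)
   apply (rule cmp_DIVP cmp_base | simp)+
   apply (intro allI impI)
  subgoal for xs
    apply (rule exI[of _ "xs!0"])
    apply (subgoal_tac "xs!0 < 2 * 2^(xs!0)")
     apply simp
    using less_exp[of "xs!0"] by linarith
  apply (simp add: tb_def)
  done

definition "TRI = Prim Zero (Comp ADD [Proj 1, Comp Succ [Proj 0]])"
lemma cmp_TRI: "cmp Q 1 TRI (\<lambda>xs. triangle (xs!0))"
  unfolding TRI_def
  apply (rule cmp_cong)
   apply (rule cmp_ADD cmp_base | simp)+
  apply (intro allI impI)
  apply (subst prs_eqI[where H="\<lambda>n ys. triangle n"])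
    apply (simp_all add: tl_nth)
  done

definition "PE = Comp ADD [Comp TRI [Comp ADD [Proj 0, Proj 1]], Proj 0]"
lemma cmp_PE: "cmp Q 2 PE (\<lambda>xs. prod_encode (xs!0, xs!1))"
  unfolding PE_def
  apply (rule cmp_cong)
   apply (rule cmp_ADD cmp_TRI cmp_base | simp)+
  apply (simp add: prod_encode_def)
  done

definition "EQB = Comp SUB [cnst 1, Comp ADD [Comp SUB [Proj 0, Proj 1], Comp SUB [Proj 1, Proj 0]]]"
lemma cmp_EQB: "cmp Q 2 EQB (\<lambda>xs. if xs!0 = xs!1 then 1 else 0)"
  unfolding EQB_def
  apply (rule cmp_cong)
   apply (rule cmp_ADD cmp_SUB cmp_base | simp)+
  done

definition "xpT = Comp MODP [Proj 1, Comp Succ [Proj 0]]"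
definition "p2T = Comp SUB [Proj 1, xpT]"
definition "ooT = Comp Orc [Comp PE [Comp TB [xpT], p2T]]"
definition "GyT = Comp BT [Proj 2, Proj 1]"
definition "GzT = Comp BT [Proj 2, Comp SUB [Comp ADD [p2T, ooT], cnst 1]]"
definition "NB = Comp IFZ [Comp BT [Proj 1, Comp Succ [Proj 0]], GyT,
   Comp IFZ [xpT, Zero, Comp IFZ [ooT, GyT, Comp EQB [GyT, GzT]]]]"

lemma cmp_NB: "cmp Q 3 NB (\<lambda>xs. nb Q (xs!0) (xs!1) (\<lambda>z. xs!2 div 2^z mod 2))"
  unfolding NB_def GzT_def GyT_def ooT_def p2T_def xpT_def
  apply (rule cmp_cong)
   apply (rule cmp_IFZ cmp_BT cmp_MODP cmp_SUB cmp_ADD cmp_PE cmp_TB cmp_EQB cmp_base | simp)+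
  apply (simp add: nb_def)
  done

definition "SUMNB = Prim Zero (Comp ADD [Proj 1, Comp MUL [Comp NB [Proj 2, Proj 0, Proj 3], Comp POW2 [Proj 0]]])"
lemma cmp_SUMNB: "cmp Q 3 SUMNB (\<lambda>xs. \<Sum>y<xs!0. nb Q (xs!1) y (\<lambda>z. xs!2 div 2^z mod 2) * 2^y)"
  unfolding SUMNB_def
  apply (rule cmp_cong)
   apply (rule cmp_ADD cmp_MUL cmp_NB cmp_POW2 cmp_base | simp)+
  apply (intro allI impI)
  apply (subst prs_eqI[where H="\<lambda>n ys. \<Sum>y<n. nb Q (ys!0) y (\<lambda>z. ys!1 div 2^z mod 2) * 2^y"])
    apply (simp_all add: tl_nth numeral_2_eq_2)
  done

fun Tab :: "(nat \<Rightarrow> nat) \<Rightarrow> nat \<Rightarrow> nat \<Rightarrow> nat" where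
  "Tab Q N 0 = 0"
| "Tab Q N (Suc L) = (\<Sum>y<N. nb Q L y (\<lambda>z. Tab Q N L div 2^z mod 2) * 2^y)"

definition "TABLE = Prim Zero (Comp SUMNB [Proj 2, Proj 0, Proj 1])"
lemma cmp_TABLE: "cmp Q 2 TABLE (\<lambda>xs. Tab Q (xs!1) (xs!0))"
  unfolding TABLE_def
  apply (rule cmp_cong)
   apply (rule cmp_SUMNB cmp_base | simp)+
  apply (intro allI impI)
  apply (subst prs_eqI[where H="\<lambda>n ys. Tab Q (ys!0) n"])
    apply (simp_all add: tl_nth numeral_2_eq_2)
  done

definition "EE = Comp BT [Comp TABLE [Proj 0, Comp POW2 [Comp Succ [Proj 0]]], Proj 0]"
lemma cmp_EE: "cmp Q 1 EE (\<lambda>xs. Tab Q (2^Suc (xs!0)) (xs!0) div 2^(xs!0) mod 2)"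
  unfolding EE_def
  apply (rule cmp_cong)
   apply (rule cmp_BT cmp_TABLE cmp_POW2 cmp_base | simp)+
  done



lemma sum_bits_less: "(\<forall>y<N. b y \<le> (1::nat)) \<Longrightarrow> (\<Sum>y<N. b y * 2^y) < (2::nat)^N"
proof (induction N)
  case 0 then show ?case by simp
next
  case (Suc N)
  then have "(\<Sum>y<N. b y * 2^y) < 2^N" by simp
  moreover have "b N * 2^N \<le> 2^N" using Suc.prems by simp
  moreover have "(\<Sum>y<Suc N. b y * 2^y) = (\<Sum>y<N. b y * 2^y) + b N * 2^N" by simp
  moreover have "(2::nat)^Suc N = 2^N + 2^N" by simp
  ultimately show ?case by linarith
qed

lemma sum_bits: "(\<forall>y<N. b y \<le> (1::nat)) \<Longrightarrow> j < N \<Longrightarrow> (\<Sum>y<N. b y * 2^y) div 2^j mod 2 = b j"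
proof (induction N arbitrary: j)
  case 0 then show ?case by simp
next
  case (Suc N)
  define S where "S = (\<Sum>y<N. b y * 2^y)"
  have bN: "\<forall>y<N. b y \<le> 1" using Suc.prems by simp
  have S': "(\<Sum>y<Suc N. b y * 2^y) = S + b N * 2^N" unfolding S_def by simp
  show ?case
  proof (cases "j < N")
    case True
    define c where "c = (2::nat)^(N - Suc j)"
    have jn: "j + Suc (N - Suc j) = N" using True by simp
    have e: "(2::nat)^N = 2^j * (2 * c)"
      unfolding c_def by (subst jn[symmetric], simp only: power_add power_Suc)
    have h: "S + b N * 2^N = S + (2 * (b N * c)) * 2^j" unfolding e by (simp add: ac_simps)
    have "(S + b N * 2^N) div 2^j = S div 2^j + 2 * (b N * c)"
      unfolding h using div_mult_self1[of "2^j" S "2 * (b N * c)"] by simp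
    then have "(S + b N * 2^N) div 2^j mod 2 = S div 2^j mod 2" by simp
    then show ?thesis using S' Suc.IH[OF bN True] S_def by simp
  next
    case False
    then have j: "j = N" using Suc.prems by simp
    have "S < 2^N" unfolding S_def using sum_bits_less[OF bN] .
    then have "(S + b N * 2^N) div 2^N = b N" by simp
    moreover have "b N \<le> 1" using Suc.prems by simp
    ultimately show ?thesis using S' j by simp
  qed
qed

lemma nb_le: "(\<And>z. G z \<le> 1) \<Longrightarrow> nb Q L y G \<le> 1"
  unfolding nb_def by auto

lemma nb_cong:
  assumes "G y = G' y"
    and "\<And>r. y div 2^Suc L mod 2 = 1 \<Longrightarrow> y mod 2^Suc L \<noteq> 0 \<Longrightarrow>
      Q (prod_encode (tb (y mod 2^Suc L), y - y mod 2^Suc L)) = Suc r \<Longrightarrow>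
      G (y - y mod 2^Suc L + r) = G' (y - y mod 2^Suc L + r)"
  shows "nb Q L y G = nb Q L y G'"
proof (cases "y div 2^Suc L mod 2 = 0")
  case True
  then show ?thesis using assms(1) by (simp add: nb_case1[where Q=Q and L=L and y=y])
next
  case False
  then have o: "y div 2^Suc L mod 2 = 1" by simp
  define x where "x = y mod 2^Suc L"
  show ?thesis
  proof (cases "x = 0")
    case True
    then show ?thesis using nb_case2[where Q=Q and L=L and y=y, OF o] x_def by simp
  next
    case x0: False
    show ?thesis
    proof (cases "Q (prod_encode (tb x, y - x))")
      case 0
      then show ?thesis using assms(1) nb_case3[where Q=Q and L=L and y=y and x=x, OF o x_def[symmetric] x0]
        by simp
    next
      case (Suc r)
      have "G (y - x + r) = G' (y - x + r)" using assms(2)[OF o] x0 Suc x_def by simp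
      then show ?thesis
        using assms(1) nb_case4[where Q=Q and L=L and y=y and x=x and r=r, OF o x_def[symmetric] x0 Suc]
        by simp
    qed
  qed
qed

lemma tab_ok:
  assumes H: "\<forall>n p r. Q (prod_encode (n,p)) = Suc r \<longrightarrow> r < 2^Suc n"
  shows "y < 2^K \<Longrightarrow> Tab Q (2^K) L div 2^y mod 2 = gc Q L y"
proof (induction L arbitrary: y)
  case 0 then show ?case by simp
next
  case (Suc L)
  let ?G = "\<lambda>z. Tab Q (2^K) L div 2^z mod 2"
  have "Tab Q (2^K) (Suc L) div 2^y mod 2 = nb Q L y ?G"
    unfolding Tab.simps using Suc.prems by (intro sum_bits nb_le allI impI) simp_all
  also have "\<dots> = nb Q L y (gc Q L)"
  proof (rule nb_cong)
    show "?G y = gc Q L y" using Suc.IH Suc.prems by simp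
    fix r
    define d where "d = (2::nat)^Suc L"
    define x where "x = y mod d"
    assume o: "y div 2^Suc L mod 2 = 1" and x0: "y mod 2^Suc L \<noteq> 0"
      and q: "Q (prod_encode (tb (y mod 2^Suc L), y - y mod 2^Suc L)) = Suc r"
    have q': "Q (prod_encode (tb x, y - x)) = Suc r" using q x_def d_def by simp
    have dpos: "0 < d" using d_def by simp
    have xd: "x < d" using x_def dpos by simp
    then have "tb x \<le> L" using tb_le d_def by simp
    moreover have "r < 2^Suc (tb x)" using H q' by blast
    moreover have "(2::nat)^Suc (tb x) \<le> 2^Suc L" if "tb x \<le> L" by (rule power_increasing) (simp_all add: that)
    ultimately have "r < 2^Suc L" by (meson less_le_trans)
    then have rd: "r < d" using d_def by simp
    have "y div d \<noteq> 0" using o d_def by auto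
    then have "d \<le> y" by (simp add: div_eq_0_iff)
    then have "d < 2^K" using Suc.prems by simp
    then have "Suc L < K" unfolding d_def using power_less_imp_less_exp[of "2::nat" "Suc L" K] by simp
    then have ddK: "d dvd 2^K" unfolding d_def by (intro le_imp_power_dvd) simp
    have yx: "y - x = (y div d) * d" unfolding x_def by (simp add: minus_mod_eq_div_mult)
    have "d dvd (y - x)" unfolding yx by simp
    moreover have "y - x < 2^K" using Suc.prems by simp
    ultimately have "y - x + d \<le> 2^K" using mult_step ddK by blast
    then have "y - x + r < 2^K" using rd by simp
    then show "?G (y - y mod 2^Suc L + r) = gc Q L (y - y mod 2^Suc L + r)"
      using Suc.IH x_def d_def by simp
  qed
  also have "\<dots> = gc Q (Suc L) y" by simp
  finally show ?case .
qed

theorem lemma2p3: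
  shows "\<exists>e::recf. \<forall>R::nat \<Rightarrow> nat \<Rightarrow> nat option.
     recursive_set2 {(n, w). R n w \<noteq> None} \<and> (\<forall>n w v. R n w = Some v \<longrightarrow> v \<in> B n) \<longrightarrow>
     (\<exists>c::nat \<Rightarrow> nat. (\<forall>w. eval (orc_of R) e [w] (c w)) \<and> (\<forall>w. c w \<in> {0, 1}) \<and>
        (\<forall>w n v. 0 < w \<longrightarrow> n < lam w \<longrightarrow> R n w = Some v \<longrightarrow> c w \<noteq> c (v + w)))"
proof (intro exI[of _ EE] allI impI)
  fix R :: "nat \<Rightarrow> nat \<Rightarrow> nat option"
  assume A: "recursive_set2 {(n, w). R n w \<noteq> None} \<and> (\<forall>n w v. R n w = Some v \<longrightarrow> v \<in> B n)"
  then have RB: "\<And>n w v. R n w = Some v \<Longrightarrow> 0 < v \<and> mu v = n" by (auto simp: B_def)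
  define Q where "Q = orc_of R"
  have QR: "\<And>n p. Q (prod_encode (n,p)) = (case R n p of None \<Rightarrow> 0 | Some v \<Rightarrow> Suc v)"
    by (simp add: Q_def orc_of_def)
  have H: "\<forall>n p r. Q (prod_encode (n,p)) = Suc r \<longrightarrow> r < 2^Suc n"
  proof (intro allI impI)
    fix n p r assume "Q (prod_encode (n,p)) = Suc r"
    then have "R n p = Some r" using QR[of n p] by (cases "R n p") auto
    then have "0 < r" "mu r = n" using RB by auto
    then show "r < 2^Suc n" using mu_bounds(2) by blast
  qed
  show "\<exists>c. (\<forall>w. eval (orc_of R) EE [w] (c w)) \<and> (\<forall>w. c w \<in> {0, 1}) \<and>
        (\<forall>w n v. 0 < w \<longrightarrow> n < lam w \<longrightarrow> R n w = Some v \<longrightarrow> c w \<noteq> c (v + w))"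
  proof (intro exI[of _ "\<lambda>w. gc Q w w"] conjI allI impI)
    fix w
    have "eval Q EE [w] (Tab Q (2^Suc w) w div 2^w mod 2)"
      using spec[OF cmp_EE[of Q, unfolded cmp_def], of "[w]"] by simp
    moreover have "Tab Q (2^Suc w) w div 2^w mod 2 = gc Q w w"
      using tab_ok[OF H, of w "Suc w" w] less_exp[of w] by simp
    ultimately show "eval (orc_of R) EE [w] (gc Q w w)" using Q_def by simp
  next
    fix w show "gc Q w w \<in> {0, 1}" using g01[of Q w w] by auto
  next
    fix w n v assume w0: "0 < w" and nl: "n < lam w" and Rv: "R n w = Some v"
    from RB[OF Rv] have v0: "0 < v" and mv: "mu v = n" by auto
    have v1: "2^n \<le> v" and v2: "v < 2^Suc n" using mu_bounds[OF v0] mv by auto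
    have dw: "2^Suc n dvd w" using lam_dvd[OF w0 nl] .
    have Qw: "Q (prod_encode (n, w)) = Suc v" using QR Rv by simp
    have "w < 2^w" by (rule less_exp)
    also have "(2::nat)^w \<le> 2^Suc (w + v)" by (rule power_increasing) simp_all
    finally have "w mod 2^Suc (w + v) = w" by simp
    then have "w mod 2^Suc (w + v) \<noteq> 0" using w0 by simp
    then have "gc Q (w + v) w \<noteq> gc Q (w + v) (w + v)" using key[where L="w+v" and Q=Q and y=w and n=n and v=v, OF v1 v2 dw Qw] by blast
    moreover have "gc Q (w + v) w = gc Q w w" by (rule g_stable)
    moreover have "gc Q (w + v) (w + v) = gc Q (v + w) (v + w)" by (simp add: add.commute)
    ultimately show "gc Q w w \<noteq> gc Q (v + w) (v + w)" by simp
  qed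
qed

end
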